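(* In the two-receiver star network (source transmitting to receivers $1,2$; at each slot, independently, the set of receivers that successfully receive is $\emptyset,\{1\},\{2\},\{1,2\}$ with probabilities $\lambda_\emptyset,\lambda_{\{1\}},\lambda_{\{2\}},\lambda_{\{1,2\}}$ summing to $1$; $A_k(n+1)=1$ if receiver $k$ receives at slot $n$ and $A_k(n+1)=A_k(n)+1$ otherwise), assume $\lambda_{\{1\}}+\lambda_{\{1,2\}}>0$ and $\lambda_{\{2\}}+\lambda_{\{1,2\}}>0$. If $(A_1,A_2)$ has the stationary distribution, then $$\mathrm{Cov}(A_1,A_2)=\frac{\lambda_\emptyset\lambda_{\{1,2\}}-\lambda_{\{1\}}\lambda_{\{2\}}}{(\lambda_{\{1\}}+\lambda_{\{1,2\}})(\lambda_{\{2\}}+\lambda_{\{1,2\}})(1-\lambda_\emptyset)}.$$ Moreover, if $(\lambda_{\{1\}}+\lambda_{\{1,2\}})(\lambda_{\{2\}}+\lambda_{\{1,2\}})=\lambda_{\{1,2\}}$, then the stationary distribution has product form, $\mathbb{P}(A_1=i,A_2=j)=\mathbb{P}(A_1=i)\mathbb{P}(A_2=j)$ for all $i,j\ge1$, and $\mathrm{Cov}(A_1,A_2)=0$; otherwise $\mathrm{Cov}(A_1,A_2)\neq0$.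
   Context: Ages take values in $\{1,2,\dots\}$. The process $(A_1(n),A_2(n))$ is a Markov chain on $\{1,2,\dots\}^2$ with a unique stationary distribution under the stated assumptions. *)

theory Defs
  imports "HOL-Probability.Probability"
begin

text \<open>One slot of the two-receiver star network.  \<open>\<Lambda>\<close> is the distribution of the
  random set of receivers (a subset of {1,2}) that receive in a slot, so that
  \<open>pmf \<Lambda> {}\<close>, \<open>pmf \<Lambda> {1}\<close>, \<open>pmf \<Lambda> {2}\<close>, \<open>pmf \<Lambda> {1,2}\<close> are the lambdas.\<close>
definition age_step :: "nat set pmf \<Rightarrow> nat \<times> nat \<Rightarrow> (nat \<times> nat) pmf" where
  "age_step \<Lambda> a = map_pmf (\<lambda>S. (if 1 \<in> S then 1 else fst a + 1,
                                 if 2 \<in> S then 1 else snd a + 1)) \<Lambda>"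

definition stationary_age :: "nat set pmf \<Rightarrow> (nat \<times> nat) pmf \<Rightarrow> bool" where
  "stationary_age \<Lambda> \<pi> \<longleftrightarrow>
     set_pmf \<pi> \<subseteq> {(i, j). 1 \<le> i \<and> 1 \<le> j} \<and> bind_pmf \<pi> (age_step \<Lambda>) = \<pi>"

definition age_cov :: "(nat \<times> nat) pmf \<Rightarrow> real" where
  "age_cov \<pi> =
     measure_pmf.expectation \<pi> (\<lambda>a. real (fst a) * real (snd a))
     - measure_pmf.expectation \<pi> (\<lambda>a. real (fst a)) * measure_pmf.expectation \<pi> (\<lambda>a. real (snd a))"

end

theory Submission imports Defs begin

lemma nnint_Lam:
  fixes \<Lambda> :: "nat set pmf" and f :: "nat set \<Rightarrow> ennreal"
  assumes supp: "set_pmf \<Lambda> \<subseteq> {{}, {1}, {2}, {1, 2}}"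
  shows "(\<integral>\<^sup>+S. f S \<partial>\<Lambda>) = f {} * pmf \<Lambda> {} + f {1} * pmf \<Lambda> {1} + f {2} * pmf \<Lambda> {2} + f {1,2} * pmf \<Lambda> {1,2}"
proof -
  have "(\<integral>\<^sup>+S. f S \<partial>\<Lambda>) = (\<Sum>S\<in>{{}, {1}, {2}, {1, 2::nat}}. f S * pmf \<Lambda> S)"
    using supp by (intro nn_integral_measure_pmf_support) auto
  also have "\<dots> = f {} * pmf \<Lambda> {} + f {1} * pmf \<Lambda> {1} + f {2} * pmf \<Lambda> {2} + f {1,2} * pmf \<Lambda> {1,2}"
    by (simp add: insert_eq_iff add.assoc)
  finally show ?thesis .
qed

lemma keyK:
  fixes \<Lambda> :: "nat set pmf" and \<pi> :: "(nat \<times> nat) pmf" and h :: "nat \<times> nat \<Rightarrow> ennreal"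
  assumes supp: "set_pmf \<Lambda> \<subseteq> {{}, {1}, {2}, {1, 2}}"
    and stat: "stationary_age \<Lambda> \<pi>"
  shows "(\<integral>\<^sup>+a. h a \<partial>\<pi>) = (\<integral>\<^sup>+a. h (fst a + 1, snd a + 1) * pmf \<Lambda> {} + h (1, snd a + 1) * pmf \<Lambda> {1}
            + h (fst a + 1, 1) * pmf \<Lambda> {2} + h (1, 1) * pmf \<Lambda> {1,2} \<partial>\<pi>)"
proof -
  have eq: "bind_pmf \<pi> (age_step \<Lambda>) = \<pi>" using stat unfolding stationary_age_def by blast
  have "(\<integral>\<^sup>+a. h a \<partial>\<pi>) = (\<integral>\<^sup>+a. h a \<partial>bind_pmf \<pi> (age_step \<Lambda>))" by (simp add: eq)
  also have "\<dots> = (\<integral>\<^sup>+a. \<integral>\<^sup>+S. h (if 1 \<in> S then 1 else fst a + 1, if 2 \<in> S then 1 else snd a + 1) \<partial>\<Lambda> \<partial>\<pi>)"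
    by (simp add: age_step_def)
  also have "\<dots> = (\<integral>\<^sup>+a. h (fst a + 1, snd a + 1) * pmf \<Lambda> {} + h (1, snd a + 1) * pmf \<Lambda> {1}
            + h (fst a + 1, 1) * pmf \<Lambda> {2} + h (1, 1) * pmf \<Lambda> {1,2} \<partial>\<pi>)"
    by (subst nnint_Lam[OF supp]) simp
  finally show ?thesis .
qed

lemma pmf_as_nn: "ennreal (pmf M x) = (\<integral>\<^sup>+y. indicator {x} y \<partial>measure_pmf M)"
  by (subst nn_integral_indicator) (simp_all add: emeasure_pmf_single)

lemma lam_sum:
  fixes \<Lambda> :: "nat set pmf"
  assumes supp: "set_pmf \<Lambda> \<subseteq> {{}, {1}, {2}, {1, 2}}"
  shows "pmf \<Lambda> {} + pmf \<Lambda> {1} + pmf \<Lambda> {2} + pmf \<Lambda> {1,2} = 1"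
proof -
  have "(\<integral>\<^sup>+S. 1 \<partial>\<Lambda>) = 1 * ennreal (pmf \<Lambda> {}) + 1 * ennreal (pmf \<Lambda> {1}) + 1 * ennreal (pmf \<Lambda> {2}) + 1 * ennreal (pmf \<Lambda> {1,2})"
    by (rule nnint_Lam[OF supp])
  moreover have "(\<integral>\<^sup>+S. 1 \<partial>\<Lambda>) = 1" by simp 
  ultimately have "ennreal (pmf \<Lambda> {} + pmf \<Lambda> {1} + pmf \<Lambda> {2} + pmf \<Lambda> {1,2}) = ennreal 1"
    by (simp only: mult_1 ennreal_plus pmf_nonneg add_nonneg_nonneg ennreal_1)
  thus ?thesis by (subst (asm) ennreal_inj) auto
qed

lemma summ_n1: assumes "0 \<le> r" "r < 1" shows "summable (\<lambda>n::nat. (real n + 1) * r^n)"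
proof -
  have "summable (\<lambda>n::nat. r^n * real n)" using geometric_sums_times_n[of r] assms by (auto simp: sums_iff)
  moreover have "summable (\<lambda>n::nat. r^n)" using assms by (intro summable_geometric) auto
  ultimately have "summable (\<lambda>n. r^n * real n + r^n)" by (rule summable_add)
  thus ?thesis by (simp add: algebra_simps)
qed
lemma summ: assumes "0 \<le> q" "q < 1" shows "summable (\<lambda>n::nat. (real n + 1)^2 * q^n)"
proof -
  define r where "r = sqrt q"
  have r: "0 \<le> r" "r < 1" using assms by (auto simp: r_def)
  have rq: "r^2 = q" using assms by (simp add: r_def)
  have s: "summable (\<lambda>n::nat. (real n + 1) * r^n)" by (rule summ_n1[OF r])
  hence "(\<lambda>n::nat. (real n + 1) * r^n) \<longlonglongrightarrow> 0" by (rule summable_LIMSEQ_zero)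
  hence "Bseq (\<lambda>n::nat. (real n + 1) * r^n)" by (rule convergent_imp_Bseq[OF convergentI])
  then obtain B where B: "B > 0" "\<And>n. norm ((real n + 1) * r^n) \<le> B" by (auto simp: Bseq_def)
  show ?thesis
  proof (rule summable_comparison_test[OF _ summable_mult[OF s, of B]])
    show "\<exists>N. \<forall>n\<ge>N. norm ((real n + 1)^2 * q^n) \<le> B * ((real n + 1) * r^n)"
    proof (intro exI allI impI)
      fix n :: nat
      have a: "0 \<le> (real n + 1) * r^n" using r by simp
      have "norm ((real n + 1)^2 * q^n) = ((real n + 1) * r^n) * ((real n + 1) * r^n)"
        using assms by (simp add: rq[symmetric] power2_eq_square power_mult_distrib[symmetric] power_mult[symmetric] mult_ac)
      also have "\<dots> \<le> B * ((real n + 1) * r^n)"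
        using B(2)[of n] a by (intro mult_right_mono) auto
      finally show "norm ((real n + 1)^2 * q^n) \<le> B * ((real n + 1) * r^n)" .
    qed
  qed
qed

lemma geo_sq_finite:
  fixes \<mu> :: "nat pmf"
  assumes "pmf \<mu> 0 = 0" "\<And>n. pmf \<mu> (Suc n) = p * q^n" "0 \<le> q" "q < 1"
  shows "(\<integral>\<^sup>+x. ennreal (real x ^ 2) \<partial>\<mu>) < \<infinity>"
proof -
  have eq: "(\<integral>\<^sup>+x. ennreal (real x ^ 2) \<partial>\<mu>) = (\<Sum>x. ennreal (pmf \<mu> x * real x ^ 2))"
    by (simp add: nn_integral_measure_pmf nn_integral_count_space_nat ennreal_mult)
  have "summable (\<lambda>n. p * ((real n + 1)^2 * q^n))" using summ[OF assms(3,4)] by (rule summable_mult)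
  hence "summable (\<lambda>n. pmf \<mu> (Suc n) * real (Suc n) ^ 2)" by (simp add: assms(2) mult_ac add.commute)
  hence s: "summable (\<lambda>x. pmf \<mu> x * real x ^ 2)" by (subst summable_Suc_iff[symmetric])
  show ?thesis unfolding eq by (subst suminf_ennreal2[OF _ s]) auto
qed

context
  fixes \<Lambda> :: "nat set pmf" and \<pi> :: "(nat \<times> nat) pmf"
  assumes supp: "set_pmf \<Lambda> \<subseteq> {{}, {1}, {2}, {1, 2}}"
    and stat: "stationary_age \<Lambda> \<pi>"
begin

lemma supp_pi: "a \<in> set_pmf \<pi> \<Longrightarrow> 1 \<le> fst a \<and> 1 \<le> snd a"
  using stat unfolding stationary_age_def by auto

lemma cong_pi: "(\<And>a. 1 \<le> fst a \<Longrightarrow> 1 \<le> snd a \<Longrightarrow> f a = g a) \<Longrightarrow> (\<integral>\<^sup>+a. f a \<partial>\<pi>) = (\<integral>\<^sup>+a. g a \<partial>\<pi>)"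
  by (intro nn_integral_cong_AE) (auto simp: AE_measure_pmf_iff dest: supp_pi)

lemma K: "(\<integral>\<^sup>+a. h a \<partial>\<pi>) = (\<integral>\<^sup>+a. h (fst a + 1, snd a + 1) * pmf \<Lambda> {} + h (1, snd a + 1) * pmf \<Lambda> {1}
            + h (fst a + 1, 1) * pmf \<Lambda> {2} + h (1, 1) * pmf \<Lambda> {1,2} \<partial>\<pi>)"
  by (rule keyK[OF supp stat])

lemma p11: "pmf \<pi> (1,1) = pmf \<Lambda> {1,2}"
proof -
  have "ennreal (pmf \<pi> (1,1)) = (\<integral>\<^sup>+a. indicator {(1,1)} a \<partial>\<pi>)" by (rule pmf_as_nn)
  also have "\<dots> = (\<integral>\<^sup>+a. ennreal (pmf \<Lambda> {1,2}) \<partial>\<pi>)"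
    by (subst K, rule cong_pi) (auto simp: indicator_def)
  also have "\<dots> = ennreal (pmf \<Lambda> {1,2})" by simp
  finally show ?thesis by (subst (asm) ennreal_inj) auto
qed

lemma pSS: "pmf \<pi> (Suc i, Suc j) = pmf \<Lambda> {} * pmf \<pi> (i, j)" if "i \<ge> 1" "j \<ge> 1"
proof -
  have "ennreal (pmf \<pi> (Suc i, Suc j)) = (\<integral>\<^sup>+a. indicator {(Suc i, Suc j)} a \<partial>\<pi>)" by (rule pmf_as_nn)
  also have "\<dots> = (\<integral>\<^sup>+a. indicator {(i,j)} a * ennreal (pmf \<Lambda> {}) \<partial>\<pi>)"
    using that by (subst K) (auto simp: indicator_def intro!: cong_pi)
  also have "\<dots> = ennreal (pmf \<pi> (i,j)) * ennreal (pmf \<Lambda> {})"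
    by (simp add: nn_integral_multc pmf_as_nn)
  finally show ?thesis by (simp add: ennreal_mult[symmetric] mult.commute)
qed

lemma p1S: "pmf \<pi> (1, Suc j) = pmf \<Lambda> {1} * pmf (map_pmf snd \<pi>) j" if "j \<ge> 1"
proof -
  have "ennreal (pmf \<pi> (1, Suc j)) = (\<integral>\<^sup>+a. indicator {(1, Suc j)} a \<partial>\<pi>)" by (rule pmf_as_nn)
  also have "\<dots> = (\<integral>\<^sup>+a. indicator {j} (snd a) * ennreal (pmf \<Lambda> {1}) \<partial>\<pi>)"
    using that by (subst K) (auto simp: indicator_def intro!: cong_pi)
  also have "\<dots> = ennreal (pmf (map_pmf snd \<pi>) j) * ennreal (pmf \<Lambda> {1})"
    by (simp add: nn_integral_multc pmf_as_nn)
  finally show ?thesis by (simp add: ennreal_mult[symmetric] mult.commute)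
qed

lemma pS1: "pmf \<pi> (Suc i, 1) = pmf \<Lambda> {2} * pmf (map_pmf fst \<pi>) i" if "i \<ge> 1"
proof -
  have "ennreal (pmf \<pi> (Suc i, 1)) = (\<integral>\<^sup>+a. indicator {(Suc i, 1)} a \<partial>\<pi>)" by (rule pmf_as_nn)
  also have "\<dots> = (\<integral>\<^sup>+a. indicator {i} (fst a) * ennreal (pmf \<Lambda> {2}) \<partial>\<pi>)"
    using that by (subst K) (auto simp: indicator_def intro!: cong_pi)
  also have "\<dots> = ennreal (pmf (map_pmf fst \<pi>) i) * ennreal (pmf \<Lambda> {2})"
    by (simp add: nn_integral_multc pmf_as_nn)
  finally show ?thesis by (simp add: ennreal_mult[symmetric] mult.commute)
qed

lemma m2_1: "pmf (map_pmf snd \<pi>) 1 = pmf \<Lambda> {2} + pmf \<Lambda> {1,2}"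
proof -
  have "ennreal (pmf (map_pmf snd \<pi>) 1) = (\<integral>\<^sup>+a. indicator {1} (snd a) \<partial>\<pi>)" by (simp add: pmf_as_nn)
  also have "\<dots> = (\<integral>\<^sup>+a. ennreal (pmf \<Lambda> {2} + pmf \<Lambda> {1,2}) \<partial>\<pi>)"
    by (subst K, rule cong_pi) (auto simp: indicator_def ennreal_plus)
  also have "\<dots> = ennreal (pmf \<Lambda> {2} + pmf \<Lambda> {1,2})" by simp
  finally show ?thesis by (subst (asm) ennreal_inj) auto
qed

lemma m2_S: "pmf (map_pmf snd \<pi>) (Suc j) = (pmf \<Lambda> {} + pmf \<Lambda> {1}) * pmf (map_pmf snd \<pi>) j"
  if "j \<ge> 1"
proof -
  have "ennreal (pmf (map_pmf snd \<pi>) (Suc j)) = (\<integral>\<^sup>+a. indicator {Suc j} (snd a) \<partial>\<pi>)" by (simp add: pmf_as_nn)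
  also have "\<dots> = (\<integral>\<^sup>+a. indicator {j} (snd a) * ennreal (pmf \<Lambda> {} + pmf \<Lambda> {1}) \<partial>\<pi>)"
    using that by (subst K) (auto simp: indicator_def ennreal_plus intro!: cong_pi)
  also have "\<dots> = ennreal (pmf (map_pmf snd \<pi>) j) * ennreal (pmf \<Lambda> {} + pmf \<Lambda> {1})"
    by (simp add: nn_integral_multc pmf_as_nn)
  finally have "ennreal (pmf (map_pmf snd \<pi>) (Suc j)) = ennreal (pmf (map_pmf snd \<pi>) j * (pmf \<Lambda> {} + pmf \<Lambda> {1}))"
    by (simp add: ennreal_mult)
  then show ?thesis by (subst (asm) ennreal_inj) (auto simp: mult.commute)
qed

lemma m1_1: "pmf (map_pmf fst \<pi>) 1 = pmf \<Lambda> {1} + pmf \<Lambda> {1,2}"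
proof -
  have "ennreal (pmf (map_pmf fst \<pi>) 1) = (\<integral>\<^sup>+a. indicator {1} (fst a) \<partial>\<pi>)" by (simp add: pmf_as_nn)
  also have "\<dots> = (\<integral>\<^sup>+a. ennreal (pmf \<Lambda> {1} + pmf \<Lambda> {1,2}) \<partial>\<pi>)"
    by (subst K, rule cong_pi) (auto simp: indicator_def ennreal_plus)
  also have "\<dots> = ennreal (pmf \<Lambda> {1} + pmf \<Lambda> {1,2})" by simp
  finally show ?thesis by (subst (asm) ennreal_inj) auto
qed

lemma m1_S: "pmf (map_pmf fst \<pi>) (Suc j) = (pmf \<Lambda> {} + pmf \<Lambda> {2}) * pmf (map_pmf fst \<pi>) j"
  if "j \<ge> 1"
proof -
  have "ennreal (pmf (map_pmf fst \<pi>) (Suc j)) = (\<integral>\<^sup>+a. indicator {Suc j} (fst a) \<partial>\<pi>)" by (simp add: pmf_as_nn)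
  also have "\<dots> = (\<integral>\<^sup>+a. indicator {j} (fst a) * ennreal (pmf \<Lambda> {} + pmf \<Lambda> {2}) \<partial>\<pi>)"
    using that by (subst K) (auto simp: indicator_def ennreal_plus intro!: cong_pi)
  also have "\<dots> = ennreal (pmf (map_pmf fst \<pi>) j) * ennreal (pmf \<Lambda> {} + pmf \<Lambda> {2})"
    by (simp add: nn_integral_multc pmf_as_nn)
  finally have "ennreal (pmf (map_pmf fst \<pi>) (Suc j)) = ennreal (pmf (map_pmf fst \<pi>) j * (pmf \<Lambda> {} + pmf \<Lambda> {2}))"
    by (simp add: ennreal_mult)
  then show ?thesis by (subst (asm) ennreal_inj) (auto simp: mult.commute)
qed

lemma m1_0: "pmf (map_pmf fst \<pi>) 0 = 0"
  using supp_pi by (intro pmf_map_outside) force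
lemma m2_0: "pmf (map_pmf snd \<pi>) 0 = 0"
  using supp_pi by (intro pmf_map_outside) force

lemma m1_explicit: "j \<ge> 1 \<Longrightarrow> pmf (map_pmf fst \<pi>) j = (pmf \<Lambda> {1} + pmf \<Lambda> {1,2}) * (pmf \<Lambda> {} + pmf \<Lambda> {2}) ^ (j - 1)"
proof (induction j rule: dec_induct)
  case base then show ?case by (use m1_1 in simp)
next
  case (step n)
  then obtain k where n: "n = Suc k" by (cases n) auto
  show ?case using step m1_S[of n] n by (simp add: mult_ac)
qed

lemma m2_explicit: "j \<ge> 1 \<Longrightarrow> pmf (map_pmf snd \<pi>) j = (pmf \<Lambda> {2} + pmf \<Lambda> {1,2}) * (pmf \<Lambda> {} + pmf \<Lambda> {1}) ^ (j - 1)"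
proof (induction j rule: dec_induct)
  case base then show ?case by (use m2_1 in simp)
next
  case (step n)
  then obtain k where n: "n = Suc k" by (cases n) auto
  show ?case using step m2_S[of n] n by (simp add: mult_ac)
qed


lemma Kreal:
  fixes f :: "nat \<times> nat \<Rightarrow> real"
  assumes nn: "\<And>a. f a \<ge> 0" and i0: "integrable \<pi> f"
    and i1: "integrable \<pi> (\<lambda>a. f (fst a + 1, snd a + 1))"
    and i2: "integrable \<pi> (\<lambda>a. f (1, snd a + 1))"
    and i3: "integrable \<pi> (\<lambda>a. f (fst a + 1, 1))"
  shows "(\<integral>a. f a \<partial>\<pi>) = (\<integral>a. f (fst a + 1, snd a + 1) \<partial>\<pi>) * pmf \<Lambda> {} + (\<integral>a. f (1, snd a + 1) \<partial>\<pi>) * pmf \<Lambda> {1}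
     + (\<integral>a. f (fst a + 1, 1) \<partial>\<pi>) * pmf \<Lambda> {2} + f (1,1) * pmf \<Lambda> {1,2}"
proof -
  let ?g = "\<lambda>a. f (fst a + 1, snd a + 1) * pmf \<Lambda> {} + f (1, snd a + 1) * pmf \<Lambda> {1}
            + f (fst a + 1, 1) * pmf \<Lambda> {2} + f (1, 1) * pmf \<Lambda> {1,2}"
  have ig: "integrable \<pi> ?g" using i1 i2 i3 by (intro Bochner_Integration.integrable_add integrable_mult_left) auto
  have "ennreal (\<integral>a. f a \<partial>\<pi>) = (\<integral>\<^sup>+a. ennreal (f a) \<partial>\<pi>)"
    using i0 nn by (subst nn_integral_eq_integral) auto
  also have "\<dots> = (\<integral>\<^sup>+a. ennreal (?g a) \<partial>\<pi>)"
    by (subst K) (auto intro!: nn_integral_cong simp: nn ennreal_mult ennreal_plus[symmetric])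
  also have "\<dots> = ennreal (\<integral>a. ?g a \<partial>\<pi>)"
    using ig nn by (subst nn_integral_eq_integral) auto
  finally have "(\<integral>a. f a \<partial>\<pi>) = (\<integral>a. ?g a \<partial>\<pi>)"
    using nn by (subst (asm) ennreal_inj) (auto intro!: integral_nonneg)
  also have "\<dots> = (\<integral>a. f (fst a + 1, snd a + 1) \<partial>\<pi>) * pmf \<Lambda> {} + (\<integral>a. f (1, snd a + 1) \<partial>\<pi>) * pmf \<Lambda> {1}
     + (\<integral>a. f (fst a + 1, 1) \<partial>\<pi>) * pmf \<Lambda> {2} + f (1,1) * pmf \<Lambda> {1,2}"
    using i1 i2 i3 by (simp add: Bochner_Integration.integral_add integrable_mult_left)
  finally show ?thesis .
qed


lemma int_bound:
  fixes f :: "nat \<times> nat \<Rightarrow> real"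
  assumes fin1: "(\<integral>\<^sup>+a. ennreal (real (fst a) ^ 2) \<partial>\<pi>) < \<infinity>"
    and fin2: "(\<integral>\<^sup>+a. ennreal (real (snd a) ^ 2) \<partial>\<pi>) < \<infinity>"
    and b: "\<And>a. \<bar>f a\<bar> \<le> c * (real (fst a) ^ 2 + real (snd a) ^ 2 + 1)"
  shows "integrable \<pi> f"
proof -
  have i1: "integrable \<pi> (\<lambda>a. real (fst a) ^ 2)" using fin1 by (intro integrableI_bounded) auto
  have i2: "integrable \<pi> (\<lambda>a. real (snd a) ^ 2)" using fin2 by (intro integrableI_bounded) auto
  have "integrable \<pi> (\<lambda>a. c * (real (fst a) ^ 2 + real (snd a) ^ 2 + 1))"
    using i1 i2 by (intro integrable_mult_right Bochner_Integration.integrable_add) auto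
  thus ?thesis
    by (rule Bochner_Integration.integrable_bound) (auto intro!: AE_I2 order_trans[OF b abs_ge_self])
qed


lemma fin1: assumes pos1: "pmf \<Lambda> {1} + pmf \<Lambda> {1, 2} > 0"
  shows "(\<integral>\<^sup>+a. ennreal (real (fst a) ^ 2) \<partial>\<pi>) < \<infinity>"
proof -
  have "(\<integral>\<^sup>+a. ennreal (real (fst a) ^ 2) \<partial>\<pi>) = (\<integral>\<^sup>+x. ennreal (real x ^ 2) \<partial>map_pmf fst \<pi>)" by simp
  also have "\<dots> < \<infinity>"
    using lam_sum[OF supp] pos1 m1_0 m1_explicit
    by (intro geo_sq_finite[where p = "pmf \<Lambda> {1} + pmf \<Lambda> {1,2}" and q = "pmf \<Lambda> {} + pmf \<Lambda> {2}"]) auto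
  finally show ?thesis .
qed

lemma fin2: assumes pos2: "pmf \<Lambda> {2} + pmf \<Lambda> {1, 2} > 0"
  shows "(\<integral>\<^sup>+a. ennreal (real (snd a) ^ 2) \<partial>\<pi>) < \<infinity>"
proof -
  have "(\<integral>\<^sup>+a. ennreal (real (snd a) ^ 2) \<partial>\<pi>) = (\<integral>\<^sup>+x. ennreal (real x ^ 2) \<partial>map_pmf snd \<pi>)" by simp
  also have "\<dots> < \<infinity>"
    using lam_sum[OF supp] pos2 m2_0 m2_explicit
    by (intro geo_sq_finite[where p = "pmf \<Lambda> {2} + pmf \<Lambda> {1,2}" and q = "pmf \<Lambda> {} + pmf \<Lambda> {1}"]) auto
  finally show ?thesis .
qed

lemma xle: "real (x::nat) \<le> real x ^ 2"
  by (cases x) (auto simp: power2_eq_square)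
lemma xyle: "real (x::nat) * real (y::nat) \<le> real x ^ 2 + real y ^ 2"
proof -
  have "0 \<le> (real x - real y)^2" by simp
  moreover have "(real x - real y)^2 = real x ^ 2 + real y ^ 2 - 2 * (real x * real y)"
    by (simp add: power2_diff mult_ac)
  moreover have "0 \<le> real x * real y" by simp
  ultimately show ?thesis by linarith
qed

lemma equations:
  assumes pos1: "pmf \<Lambda> {1} + pmf \<Lambda> {1, 2} > 0" and pos2: "pmf \<Lambda> {2} + pmf \<Lambda> {1, 2} > 0"
  defines "e1 \<equiv> \<integral>a. real (fst a) \<partial>\<pi>" and "e2 \<equiv> \<integral>a. real (snd a) \<partial>\<pi>"
    and "m \<equiv> \<integral>a. real (fst a) * real (snd a) \<partial>\<pi>"
  shows "e1 = (e1 + 1) * (pmf \<Lambda> {} + pmf \<Lambda> {2}) + pmf \<Lambda> {1} + pmf \<Lambda> {1,2}"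
    and "e2 = (e2 + 1) * (pmf \<Lambda> {} + pmf \<Lambda> {1}) + pmf \<Lambda> {2} + pmf \<Lambda> {1,2}"
    and "m = (m + e1 + e2 + 1) * pmf \<Lambda> {} + (e2 + 1) * pmf \<Lambda> {1} + (e1 + 1) * pmf \<Lambda> {2} + pmf \<Lambda> {1,2}"
proof -
  note F = fin1[OF pos1] fin2[OF pos2]
  have iX: "integrable \<pi> (\<lambda>a. real (fst a))"
  proof (rule int_bound[OF F, of _ 1])
    fix a :: "nat \<times> nat"
    have "real (fst a) \<le> real (fst a) ^ 2" by (rule xle)
    moreover have "0 \<le> real (snd a) ^ 2" by simp
    moreover have "\<bar>real (fst a)\<bar> = real (fst a)" by simp
    ultimately show "\<bar>real (fst a)\<bar> \<le> 1 * (real (fst a) ^ 2 + real (snd a) ^ 2 + 1)" unfolding mult_1_left by linarith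
  qed
  have iY: "integrable \<pi> (\<lambda>a. real (snd a))"
  proof (rule int_bound[OF F, of _ 1])
    fix a :: "nat \<times> nat"
    have "real (snd a) \<le> real (snd a) ^ 2" by (rule xle)
    moreover have "0 \<le> real (fst a) ^ 2" by simp
    moreover have "\<bar>real (snd a)\<bar> = real (snd a)" by simp
    ultimately show "\<bar>real (snd a)\<bar> \<le> 1 * (real (fst a) ^ 2 + real (snd a) ^ 2 + 1)" unfolding mult_1_left by linarith
  qed
  have iXY: "integrable \<pi> (\<lambda>a. real (fst a) * real (snd a))"
  proof (rule int_bound[OF F, of _ 1])
    fix a :: "nat \<times> nat"
    have "real (fst a) * real (snd a) \<le> real (fst a) ^ 2 + real (snd a) ^ 2" by (rule xyle)
    moreover have "\<bar>real (fst a) * real (snd a)\<bar> = real (fst a) * real (snd a)" by simp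
    ultimately show "\<bar>real (fst a) * real (snd a)\<bar> \<le> 1 * (real (fst a) ^ 2 + real (snd a) ^ 2 + 1)" unfolding mult_1_left by linarith
  qed
  show "e1 = (e1 + 1) * (pmf \<Lambda> {} + pmf \<Lambda> {2}) + pmf \<Lambda> {1} + pmf \<Lambda> {1,2}"
    unfolding e1_def using iX
    by (subst Kreal[where f = "\<lambda>a. real (fst a)"]) (auto simp: Bochner_Integration.integral_add algebra_simps)
  show "e2 = (e2 + 1) * (pmf \<Lambda> {} + pmf \<Lambda> {1}) + pmf \<Lambda> {2} + pmf \<Lambda> {1,2}"
    unfolding e2_def using iY
    by (subst Kreal[where f = "\<lambda>a. real (snd a)"]) (auto simp: Bochner_Integration.integral_add algebra_simps)
  have "m = (\<integral>a. (real (fst a) * real (snd a) + real (fst a)) + (real (snd a) + 1) \<partial>\<pi>) * pmf \<Lambda> {} + (\<integral>a. real (snd a) + 1 \<partial>\<pi>) * pmf \<Lambda> {1}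
     + (\<integral>a. real (fst a) + 1 \<partial>\<pi>) * pmf \<Lambda> {2} + pmf \<Lambda> {1,2}"
    unfolding m_def using iX iY iXY
    by (subst Kreal[where f = "\<lambda>a. real (fst a) * real (snd a)"]) (auto simp: algebra_simps)
  also have "\<dots> = (m + e1 + e2 + 1) * pmf \<Lambda> {} + (e2 + 1) * pmf \<Lambda> {1} + (e1 + 1) * pmf \<Lambda> {2} + pmf \<Lambda> {1,2}"
    unfolding m_def e1_def e2_def using iX iY iXY
    by (simp add: Bochner_Integration.integral_add)
  finally show "m = (m + e1 + e2 + 1) * pmf \<Lambda> {} + (e2 + 1) * pmf \<Lambda> {1} + (e1 + 1) * pmf \<Lambda> {2} + pmf \<Lambda> {1,2}" .
qed


lemma product:
  assumes hyp: "(pmf \<Lambda> {1} + pmf \<Lambda> {1, 2}) * (pmf \<Lambda> {2} + pmf \<Lambda> {1, 2}) = pmf \<Lambda> {1, 2}"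
  shows "pmf \<pi> (Suc i, Suc j) = pmf (map_pmf fst \<pi>) (Suc i) * pmf (map_pmf snd \<pi>) (Suc j)"
proof -
  define p1 where "p1 = pmf \<Lambda> {1} + pmf \<Lambda> {1, 2}"
  define p2 where "p2 = pmf \<Lambda> {2} + pmf \<Lambda> {1, 2}"
  define q1 where "q1 = pmf \<Lambda> {} + pmf \<Lambda> {2}"
  define q2 where "q2 = pmf \<Lambda> {} + pmf \<Lambda> {1}"
  have S: "pmf \<Lambda> {} + pmf \<Lambda> {1} + pmf \<Lambda> {2} + pmf \<Lambda> {1,2} = 1" by (rule lam_sum[OF supp])
  have h: "p1 * p2 = pmf \<Lambda> {1,2}" using hyp by (simp add: p1_def p2_def)
  have q1e: "q1 = 1 - p1" and q2e: "q2 = 1 - p2" using S by (simp_all add: p1_def p2_def q1_def q2_def)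
  have A: "pmf \<Lambda> {1} = p1 * q2"
  proof -
    have "p1 * q2 = p1 - p1 * p2" by (simp add: q2e algebra_simps)
    thus ?thesis using h by (simp add: p1_def)
  qed
  have B: "pmf \<Lambda> {2} = p2 * q1"
  proof -
    have "p2 * q1 = p2 - p1 * p2" by (simp add: q1e algebra_simps)
    thus ?thesis using h by (simp add: p2_def)
  qed
  have C: "pmf \<Lambda> {} = q1 * q2"
  proof -
    have "q1 * q2 = 1 - p1 - p2 + p1 * p2" by (simp add: q1e q2e algebra_simps)
    thus ?thesis using h S by (simp add: p1_def p2_def)
  qed
  have M1: "pmf (map_pmf fst \<pi>) (Suc n) = p1 * q1 ^ n" for n
    using m1_explicit[of "Suc n"] by (simp add: p1_def q1_def)
  have M2: "pmf (map_pmf snd \<pi>) (Suc n) = p2 * q2 ^ n" for n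
    using m2_explicit[of "Suc n"] by (simp add: p2_def q2_def)
  show ?thesis
  proof (induction i arbitrary: j)
    case 0
    show ?case
    proof (cases j)
      case 0 then show ?thesis using p11 h M1[of 0] M2[of 0] by simp
    next
      case (Suc k)
      have "pmf \<pi> (1, Suc (Suc k)) = pmf \<Lambda> {1} * pmf (map_pmf snd \<pi>) (Suc k)" by (rule p1S) simp
      then show ?thesis using Suc M1[of 0] M2[of k] M2[of "Suc k"] A by simp
    qed
  next
    case (Suc i)
    show ?case
    proof (cases j)
      case 0
      have "pmf \<pi> (Suc (Suc i), 1) = pmf \<Lambda> {2} * pmf (map_pmf fst \<pi>) (Suc i)" by (rule pS1) simp
      then show ?thesis using 0 M2[of 0] M1[of i] M1[of "Suc i"] B by simp
    next
      case (Suc k)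
      have "pmf \<pi> (Suc (Suc i), Suc (Suc k)) = pmf \<Lambda> {} * pmf \<pi> (Suc i, Suc k)" by (rule pSS) simp_all
      then show ?thesis using Suc.IH[of k] \<open>j = Suc k\<close> M1 M2 C by (simp add: mult_ac)
    qed
  qed
qed

end
theorem mainTheorem3:
  fixes \<Lambda> :: "nat set pmf" and \<pi> :: "(nat \<times> nat) pmf"
  assumes supp: "set_pmf \<Lambda> \<subseteq> {{}, {1}, {2}, {1, 2}}"
    and pos1: "pmf \<Lambda> {1} + pmf \<Lambda> {1, 2} > 0"
    and pos2: "pmf \<Lambda> {2} + pmf \<Lambda> {1, 2} > 0"
    and stat: "stationary_age \<Lambda> \<pi>"
  shows "age_cov \<pi> =
           (pmf \<Lambda> {} * pmf \<Lambda> {1, 2} - pmf \<Lambda> {1} * pmf \<Lambda> {2}) /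
           ((pmf \<Lambda> {1} + pmf \<Lambda> {1, 2}) * (pmf \<Lambda> {2} + pmf \<Lambda> {1, 2}) * (1 - pmf \<Lambda> {}))
       \<and> ((pmf \<Lambda> {1} + pmf \<Lambda> {1, 2}) * (pmf \<Lambda> {2} + pmf \<Lambda> {1, 2}) = pmf \<Lambda> {1, 2} \<longrightarrow>
            (\<forall>i j. 1 \<le> i \<longrightarrow> 1 \<le> j \<longrightarrow>
               pmf \<pi> (i, j) = pmf (map_pmf fst \<pi>) i * pmf (map_pmf snd \<pi>) j)
            \<and> age_cov \<pi> = 0)
       \<and> ((pmf \<Lambda> {1} + pmf \<Lambda> {1, 2}) * (pmf \<Lambda> {2} + pmf \<Lambda> {1, 2}) \<noteq> pmf \<Lambda> {1, 2} \<longrightarrow>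
            age_cov \<pi> \<noteq> 0)"
proof -
  define l0 where "l0 = pmf \<Lambda> {}"
  define l1 where "l1 = pmf \<Lambda> {1}"
  define l2 where "l2 = pmf \<Lambda> {2}"
  define l12 where "l12 = pmf \<Lambda> {1,2}"
  define e1 where "e1 = (\<integral>a. real (fst a) \<partial>\<pi>)"
  define e2 where "e2 = (\<integral>a. real (snd a) \<partial>\<pi>)"
  define m where "m = (\<integral>a. real (fst a) * real (snd a) \<partial>\<pi>)"
  note EQ = equations[OF supp stat pos1 pos2]
  have E1: "e1 = (e1 + 1) * (l0 + l2) + l1 + l12" using EQ(1) by (simp add: e1_def l0_def l1_def l2_def l12_def)
  have E2: "e2 = (e2 + 1) * (l0 + l1) + l2 + l12" using EQ(2) by (simp add: e2_def l0_def l1_def l2_def l12_def)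
  have E3: "m = (m + e1 + e2 + 1) * l0 + (e2 + 1) * l1 + (e1 + 1) * l2 + l12"
    using EQ(3) by (simp add: e1_def e2_def m_def l0_def l1_def l2_def l12_def)
  have S: "l0 + l1 + l2 + l12 = 1" using lam_sum[OF supp] by (simp add: l0_def l1_def l2_def l12_def)
  have P1: "l1 + l12 > 0" and P2: "l2 + l12 > 0" using pos1 pos2 by (simp_all add: l1_def l2_def l12_def)
  have l12e: "l12 = 1 - l0 - l1 - l2" using S by simp
  have e1v: "e1 = 1 / (l1 + l12)"
  proof -
    have "e1 * (l1 + l12) = 1" using E1 S by (simp add: algebra_simps l12e)
    thus ?thesis using P1 by (simp add: field_simps)
  qed
  have e2v: "e2 = 1 / (l2 + l12)"
  proof -
    have "e2 * (l2 + l12) = 1" using E2 S by (simp add: algebra_simps l12e)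
    thus ?thesis using P2 by (simp add: field_simps)
  qed
  have "0 \<le> l2" by (simp add: l2_def)
  hence D0: "1 - l0 > 0" using P1 S by linarith
  have mv: "m * (1 - l0) = l0 * (e1 + e2) + l1 * e2 + l2 * e1 + 1"
    using E3 S by (simp add: algebra_simps l12e)
  have cov: "age_cov \<pi> = m - e1 * e2" by (simp add: age_cov_def m_def e1_def e2_def)
  have e1p: "e1 * (l1 + l12) = 1" using e1v P1 by simp
  have e2p: "e2 * (l2 + l12) = 1" using e2v P2 by simp
  have Dnz: "(l1 + l12) * (l2 + l12) * (1 - l0) \<noteq> 0" using P1 P2 D0 by simp
  have "age_cov \<pi> * ((l1 + l12) * (l2 + l12) * (1 - l0))
        = (m * (1 - l0)) * (l1 + l12) * (l2 + l12) - (e1 * (l1 + l12)) * (e2 * (l2 + l12)) * (1 - l0)"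
    by (simp add: cov algebra_simps)
  also have "\<dots> = (l0 * (e1 + e2) + l1 * e2 + l2 * e1 + 1) * (l1 + l12) * (l2 + l12) - (1 - l0)"
    by (simp add: mv e1p e2p)
  also have "\<dots> = l0 * ((e1 * (l1 + l12)) * (l2 + l12) + (e2 * (l2 + l12)) * (l1 + l12))
       + l1 * (e2 * (l2 + l12)) * (l1 + l12) + l2 * (e1 * (l1 + l12)) * (l2 + l12) + (l1 + l12) * (l2 + l12) - (1 - l0)"
    by (simp add: algebra_simps)
  also have "\<dots> = l0 * ((l2 + l12) + (l1 + l12)) + l1 * (l1 + l12) + l2 * (l2 + l12) + (l1 + l12) * (l2 + l12) - (1 - l0)"
    by (simp only: e1p e2p mult_1_left)
  also have "\<dots> = l0 * l12 - l1 * l2"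
    by (simp add: l12e algebra_simps)
  finally have cm: "age_cov \<pi> * ((l1 + l12) * (l2 + l12) * (1 - l0)) = l0 * l12 - l1 * l2" .
  have covf: "age_cov \<pi> = (l0 * l12 - l1 * l2) / ((l1 + l12) * (l2 + l12) * (1 - l0))"
    using cm Dnz by (simp add: eq_divide_eq)
  have key: "(l1 + l12) * (l2 + l12) - l12 = -(l0 * l12 - l1 * l2)"
    by (simp add: l12e algebra_simps)
  have part1: "age_cov \<pi> = (pmf \<Lambda> {} * pmf \<Lambda> {1, 2} - pmf \<Lambda> {1} * pmf \<Lambda> {2}) /
           ((pmf \<Lambda> {1} + pmf \<Lambda> {1, 2}) * (pmf \<Lambda> {2} + pmf \<Lambda> {1, 2}) * (1 - pmf \<Lambda> {}))"
    using covf by (simp add: l0_def l1_def l2_def l12_def)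
  show ?thesis
  proof (intro conjI impI allI)
    show "age_cov \<pi> = (pmf \<Lambda> {} * pmf \<Lambda> {1, 2} - pmf \<Lambda> {1} * pmf \<Lambda> {2}) /
           ((pmf \<Lambda> {1} + pmf \<Lambda> {1, 2}) * (pmf \<Lambda> {2} + pmf \<Lambda> {1, 2}) * (1 - pmf \<Lambda> {}))" by (rule part1)
  next
    fix i j :: nat
    assume h: "(pmf \<Lambda> {1} + pmf \<Lambda> {1, 2}) * (pmf \<Lambda> {2} + pmf \<Lambda> {1, 2}) = pmf \<Lambda> {1, 2}"
      and i: "1 \<le> i" and j: "1 \<le> j"
    obtain i' j' where "i = Suc i'" "j = Suc j'" using i j by (cases i; cases j) auto
    then show "pmf \<pi> (i, j) = pmf (map_pmf fst \<pi>) i * pmf (map_pmf snd \<pi>) j"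
      using product[OF supp stat h] by simp
  next
    assume h: "(pmf \<Lambda> {1} + pmf \<Lambda> {1, 2}) * (pmf \<Lambda> {2} + pmf \<Lambda> {1, 2}) = pmf \<Lambda> {1, 2}"
    hence "l0 * l12 - l1 * l2 = 0" using key by (simp add: l0_def l1_def l2_def l12_def)
    thus "age_cov \<pi> = 0" using covf by simp
  next
    assume h: "(pmf \<Lambda> {1} + pmf \<Lambda> {1, 2}) * (pmf \<Lambda> {2} + pmf \<Lambda> {1, 2}) \<noteq> pmf \<Lambda> {1, 2}"
    hence "l0 * l12 - l1 * l2 \<noteq> 0" using key by (simp add: l0_def l1_def l2_def l12_def)
    thus "age_cov \<pi> \<noteq> 0" using covf P1 P2 D0 by simp
  qed
qed

end
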